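(* Let $S$ be an $L$-theory extending $I\Sigma_1$ such that for some $K\in\mathbb{N}$, $S$ proves: for all $a,b,c$, if $a,b,c$ are pairwise coprime and $a+b=c$, then $c < K\,\mathrm{rad}(abc)^{1+1/3}$; and $S$ proves Catalan's conjecture for the definable exponential $x^y$, i.e., the only $x,y,a,b>1$ with $x^a - y^b = 1$ are $x=3$, $a=2$, $y=2$, $b=3$. Then the theory $S + \mathrm{Exp}'$ proves Catalan's conjecture for $e$: whenever $x,y \in B$ and $a,b \in A$ with $x,y,a,b>1$ and $e(x,a) - e(y,b) = 1$, then $x=3$, $a=2$, $y=2$, $b=3$.
   Context: $L = \langle 0,1,+,\cdot,\le\rangle$ and $L^e = \langle 0,1,+,\cdot,e,\le\rangle$ with $e$ a binary (possibly partial) function symbol. $I\Sigma_1$ is Robinson arithmetic plus induction for $\Sigma_1$-formulas; in it the usual exponential $x^y$ is $\Delta_1$-definable and every element has a unique prime factorization. $\mathrm{rad}(a)$ is the product of all primes dividing $a$, each taken once. Presburger arithmetic $\mathrm{Pr}$: $0 \ne z+1$; $x\neq 0 \to \exists z\,(x = z+1)$; $x+z=y+z\to x=y$; $x+0=x$; associativity and commutativity of $+$; $x\le y \leftrightarrow \exists z\,(x+z=y)$; and for each standard $0<n\in\mathbb{N}$, $\exists y\,(ny \le x < n(y+1))$. $\mathrm{Exp}'$ consists of the axioms for an $L^e$-structure $\langle \mathcal{B},e\rangle$: (e0) there is an $L$-substructure $\mathcal{A}$ of $\mathcal{B}$ (universe $A$) satisfying the axioms of $\mathrm{Pr}$ such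 that $e: B\times A\to B$; and for all $x\in B$, $y,z\in A$: (e1) $(x=1\vee y=0)\leftrightarrow e(x,y)=1$; (e2) $x\neq0\to e(x,y)\ne 0$; (e3) $e(x,1)=x$; (e4) $e(x,y+z)=e(x,y)\cdot e(x,z)$. *)

theory Defs
  imports Main
begin

record 'a Lstr =
  zer :: 'a
  one :: 'a
  add :: "'a \<Rightarrow> 'a \<Rightarrow> 'a"
  mul :: "'a \<Rightarrow> 'a \<Rightarrow> 'a"
  leq :: "'a \<Rightarrow> 'a \<Rightarrow> bool"

datatype trm = Var nat | Zr | On | Pls trm trm | Tms trm trm

datatype fm =
    Eq trm trm | Le trm trm | Neg fm | Conj fm fm | Disj fm fm | Impl fm fm
  | BEx nat trm fm
  | BAll nat trm fm
  | Ex nat fm | All nat fm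

fun evt :: "'a Lstr \<Rightarrow> (nat \<Rightarrow> 'a) \<Rightarrow> trm \<Rightarrow> 'a" where
  "evt M v (Var i) = v i"
| "evt M v Zr = zer M"
| "evt M v On = one M"
| "evt M v (Pls s t) = add M (evt M v s) (evt M v t)"
| "evt M v (Tms s t) = mul M (evt M v s) (evt M v t)"

fun sat :: "'a Lstr \<Rightarrow> (nat \<Rightarrow> 'a) \<Rightarrow> fm \<Rightarrow> bool" where
  "sat M v (Eq s t) = (evt M v s = evt M v t)"
| "sat M v (Le s t) = leq M (evt M v s) (evt M v t)"
| "sat M v (Neg p) = (\<not> sat M v p)"
| "sat M v (Conj p q) = (sat M v p \<and> sat M v q)"
| "sat M v (Disj p q) = (sat M v p \<or> sat M v q)"
| "sat M v (Impl p q) = (sat M v p \<longrightarrow> sat M v q)"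
| "sat M v (BEx x t p) = (\<exists>a. leq M a (evt M v t) \<and> sat M (v(x := a)) p)"
| "sat M v (BAll x t p) = (\<forall>a. leq M a (evt M v t) \<longrightarrow> sat M (v(x := a)) p)"
| "sat M v (Ex x p) = (\<exists>a. sat M (v(x := a)) p)"
| "sat M v (All x p) = (\<forall>a. sat M (v(x := a)) p)"

fun delta0 :: "fm \<Rightarrow> bool" where
  "delta0 (Eq s t) = True"
| "delta0 (Le s t) = True"
| "delta0 (Neg p) = delta0 p"
| "delta0 (Conj p q) = (delta0 p \<and> delta0 q)"
| "delta0 (Disj p q) = (delta0 p \<and> delta0 q)"
| "delta0 (Impl p q) = (delta0 p \<and> delta0 q)"
| "delta0 (BEx x t p) = delta0 p"
| "delta0 (BAll x t p) = delta0 p"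
| "delta0 (Ex x p) = False"
| "delta0 (All x p) = False"

fun sigma1 :: "fm \<Rightarrow> bool" where
  "sigma1 (Ex x p) = (sigma1 p \<or> delta0 p)"
| "sigma1 p = delta0 p"

definition RobQ :: "'a Lstr \<Rightarrow> bool" where
  "RobQ M \<longleftrightarrow>
     (\<forall>x. add M x (one M) \<noteq> zer M) \<and>
     (\<forall>x y. add M x (one M) = add M y (one M) \<longrightarrow> x = y) \<and>
     (\<forall>x. x \<noteq> zer M \<longrightarrow> (\<exists>y. x = add M y (one M))) \<and>
     (\<forall>x. add M x (zer M) = x) \<and>
     (\<forall>x y. add M x (add M y (one M)) = add M (add M x y) (one M)) \<and>
     (\<forall>x. mul M x (zer M) = zer M) \<and>
     (\<forall>x y. mul M x (add M y (one M)) = add M (mul M x y) x) \<and>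
     (\<forall>x y. leq M x y \<longleftrightarrow> (\<exists>z. add M x z = y))"

definition ISigma1 :: "'a Lstr \<Rightarrow> bool" where
  "ISigma1 M \<longleftrightarrow> RobQ M \<and>
     (\<forall>p x v. sigma1 p \<longrightarrow>
        sat M (v(x := zer M)) p \<longrightarrow>
        (\<forall>a. sat M (v(x := a)) p \<longrightarrow> sat M (v(x := add M a (one M))) p) \<longrightarrow>
        (\<forall>a. sat M (v(x := a)) p))"

fun nm :: "'a Lstr \<Rightarrow> nat \<Rightarrow> 'a" where
  "nm M 0 = zer M"
| "nm M (Suc n) = add M (nm M n) (one M)"

text \<open>n-fold sum y + ... + y (the abbreviation n y of Presburger arithmetic).\<close>
fun madd :: "'a Lstr \<Rightarrow> nat \<Rightarrow> 'a \<Rightarrow> 'a" where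
  "madd M 0 y = zer M"
| "madd M (Suc n) y = add M (madd M n y) y"

definition lt :: "'a Lstr \<Rightarrow> 'a \<Rightarrow> 'a \<Rightarrow> bool" where
  "lt M x y \<longleftrightarrow> leq M x y \<and> x \<noteq> y"

definition mdvd :: "'a Lstr \<Rightarrow> 'a \<Rightarrow> 'a \<Rightarrow> bool" where
  "mdvd M d a \<longleftrightarrow> (\<exists>k. mul M d k = a)"

definition mcoprime :: "'a Lstr \<Rightarrow> 'a \<Rightarrow> 'a \<Rightarrow> bool" where
  "mcoprime M a b \<longleftrightarrow> (\<forall>d. mdvd M d a \<and> mdvd M d b \<longrightarrow> d = one M)"

definition mprime :: "'a Lstr \<Rightarrow> 'a \<Rightarrow> bool" where
  "mprime M p \<longleftrightarrow> lt M (one M) p \<and> (\<forall>d. mdvd M d p \<longrightarrow> d = one M \<or> d = p)"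

definition msquarefree :: "'a Lstr \<Rightarrow> 'a \<Rightarrow> bool" where
  "msquarefree M r \<longleftrightarrow> (\<forall>d. mdvd M (mul M d d) r \<longrightarrow> d = one M)"

text \<open>r = rad(a): the squarefree divisor of a divisible by every prime dividing a
  (in models of I Sigma_1 this is the product of the distinct primes dividing a).\<close>
definition is_rad :: "'a Lstr \<Rightarrow> 'a \<Rightarrow> 'a \<Rightarrow> bool" where
  "is_rad M r a \<longleftrightarrow> mdvd M r a \<and> msquarefree M r \<and>
     (\<forall>p. mprime M p \<and> mdvd M p a \<longrightarrow> mdvd M p r)"

text \<open>abc with exponent 1+1/3 and constant K:  c < K rad(abc)^(4/3), equivalently c^3 < K^3 rad(abc)^4.\<close>
definition abc_third :: "'a Lstr \<Rightarrow> nat \<Rightarrow> bool" where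
  "abc_third M K \<longleftrightarrow>
     (\<forall>a b c r. mcoprime M a b \<and> mcoprime M a c \<and> mcoprime M b c \<and> add M a b = c \<and>
        is_rad M r (mul M (mul M a b) c) \<longrightarrow>
        lt M (mul M c (mul M c c)) (mul M (nm M (K ^ 3)) (mul M (mul M r r) (mul M r r))))"

definition exp_sigma1 :: "'a Lstr \<Rightarrow> ('a \<Rightarrow> 'a \<Rightarrow> 'a) \<Rightarrow> bool" where
  "exp_sigma1 M f \<longleftrightarrow>
     (\<exists>p. sigma1 p \<and>
        (\<forall>v. sat M v p \<longleftrightarrow> f (v 0) (v 1) = v 2)) \<and>
     (\<forall>x. f x (zer M) = one M) \<and>
     (\<forall>x y. f x (add M y (one M)) = mul M (f x y) x)"

definition catalan :: "'a Lstr \<Rightarrow> 'a set \<Rightarrow> 'a set \<Rightarrow> ('a \<Rightarrow> 'a \<Rightarrow> 'a) \<Rightarrow> bool" where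
  "catalan M B A f \<longleftrightarrow>
     (\<forall>x\<in>B. \<forall>y\<in>B. \<forall>a\<in>A. \<forall>b\<in>A.
        lt M (one M) x \<and> lt M (one M) y \<and> lt M (one M) a \<and> lt M (one M) b \<and>
        f x a = add M (f y b) (one M) \<longrightarrow>
        x = nm M 3 \<and> a = nm M 2 \<and> y = nm M 2 \<and> b = nm M 3)"

definition presburger_sub :: "'a Lstr \<Rightarrow> 'a set \<Rightarrow> bool" where
  "presburger_sub M A \<longleftrightarrow>
     zer M \<in> A \<and> one M \<in> A \<and>
     (\<forall>x\<in>A. \<forall>y\<in>A. add M x y \<in> A \<and> mul M x y \<in> A) \<and>
     (\<forall>z\<in>A. zer M \<noteq> add M z (one M)) \<and>
     (\<forall>x\<in>A. x \<noteq> zer M \<longrightarrow> (\<exists>z\<in>A. x = add M z (one M))) \<and>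
     (\<forall>x\<in>A. \<forall>y\<in>A. \<forall>z\<in>A. add M x z = add M y z \<longrightarrow> x = y) \<and>
     (\<forall>x\<in>A. add M x (zer M) = x) \<and>
     (\<forall>x\<in>A. \<forall>y\<in>A. \<forall>z\<in>A. add M (add M x y) z = add M x (add M y z)) \<and>
     (\<forall>x\<in>A. \<forall>y\<in>A. add M x y = add M y x) \<and>
     (\<forall>x\<in>A. \<forall>y\<in>A. leq M x y \<longleftrightarrow> (\<exists>z\<in>A. add M x z = y)) \<and>
     (\<forall>n::nat. 0 < n \<longrightarrow> (\<forall>x\<in>A. \<exists>y\<in>A.
        leq M (madd M n y) x \<and> lt M x (madd M n (add M y (one M)))))"

text \<open>Exp': the L^e-structure (M, e) with e : M x A -> M (values outside M x A are irrelevant).\<close>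
definition ExpPrime :: "'a Lstr \<Rightarrow> 'a set \<Rightarrow> ('a \<Rightarrow> 'a \<Rightarrow> 'a) \<Rightarrow> bool" where
  "ExpPrime M A e \<longleftrightarrow> presburger_sub M A \<and>
     (\<forall>x. \<forall>y\<in>A. \<forall>z\<in>A.
        ((x = one M \<or> y = zer M) \<longleftrightarrow> e x y = one M) \<and>
        (x \<noteq> zer M \<longrightarrow> e x y \<noteq> zer M) \<and>
        e x (one M) = x \<and>
        e x (add M y z) = mul M (e x y) (e x z))"

end

theory Submission
  imports Defs
begin

locale isig =
  fixes M :: "'a Lstr"
  assumes IS: "ISigma1 M"
begin

abbreviation Z where "Z \<equiv> zer M"
abbreviation o1 where "o1 \<equiv> one M"
abbreviation pl (infixl "\<oplus>" 65) where "x \<oplus> y \<equiv> add M x y"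
abbreviation tm (infixl "\<otimes>" 70) where "x \<otimes> y \<equiv> mul M x y"
abbreviation le (infix "\<preceq>" 50) where "x \<preceq> y \<equiv> leq M x y"
abbreviation ls (infix "\<prec>" 50) where "x \<prec> y \<equiv> lt M x y"

lemma Q: "x \<oplus> o1 \<noteq> Z" "x \<oplus> o1 = y \<oplus> o1 \<longleftrightarrow> x = y"
  "x \<noteq> Z \<Longrightarrow> \<exists>y. x = y \<oplus> o1" "x \<oplus> Z = x"
  "x \<oplus> (y \<oplus> o1) = (x \<oplus> y) \<oplus> o1" "x \<otimes> Z = Z"
  "x \<otimes> (y \<oplus> o1) = x \<otimes> y \<oplus> x" "x \<preceq> y \<longleftrightarrow> (\<exists>z. x \<oplus> z = y)"
  using IS unfolding ISigma1_def RobQ_def by blast+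

lemma ind:
  assumes "sigma1 p" "\<And>a. sat M (v(x:=a)) p = P a" "P Z" "\<And>a. P a \<Longrightarrow> P (a \<oplus> o1)"
  shows "P a"
proof -
  have "\<forall>a. sat M (v(x := a)) p"
    using IS assms unfolding ISigma1_def by (metis (no_types, lifting))
  thus ?thesis using assms(2) by blast
qed

lemma add_0_left[simp]: "Z \<oplus> a = a"
  by (rule ind[where p="Eq (Pls Zr (Var 0)) (Var 0)" and x=0 and v="\<lambda>_. Z" and P="\<lambda>a. Z \<oplus> a = a"])
     (simp_all add: Q)


lemma Q1[simp]: "x \<oplus> o1 \<noteq> Z" using Q(1) .
lemma Q1'[simp]: "Z \<noteq> x \<oplus> o1" using Q(1) by metis
lemma Q2[simp]: "x \<oplus> o1 = y \<oplus> o1 \<longleftrightarrow> x = y" using Q(2) .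
lemma Q3: "x \<noteq> Z \<Longrightarrow> \<exists>y. x = y \<oplus> o1" using Q(3) .
lemma Q4[simp]: "x \<oplus> Z = x" using Q(4) .
lemma Q6[simp]: "x \<otimes> Z = Z" using Q(6) .
lemma Q7: "x \<otimes> (y \<oplus> o1) = x \<otimes> y \<oplus> x" using Q(7) .
lemma leq_def: "x \<preceq> y \<longleftrightarrow> (\<exists>z. x \<oplus> z = y)" using Q(8) .

lemma add_assoc: "(x \<oplus> y) \<oplus> z = x \<oplus> (y \<oplus> z)"
  by (rule ind[where p="Eq (Pls (Pls (Var 1) (Var 2)) (Var 0)) (Pls (Var 1) (Pls (Var 2) (Var 0)))"
     and x=0 and v="\<lambda>i. if i = 1 then x else y" and P="\<lambda>z. (x \<oplus> y) \<oplus> z = x \<oplus> (y \<oplus> z)"])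
     (simp_all add: Q(5))

lemma succ_left: "(x \<oplus> o1) \<oplus> y = (x \<oplus> y) \<oplus> o1"
  by (rule ind[where p="Eq (Pls (Pls (Var 1) On) (Var 0)) (Pls (Pls (Var 1) (Var 0)) On)"
     and x=0 and v="\<lambda>i. x" and P="\<lambda>y. (x \<oplus> o1) \<oplus> y = (x \<oplus> y) \<oplus> o1"])
     (simp_all add: Q(5))

lemma add_comm: "x \<oplus> y = y \<oplus> x"
  by (rule ind[where p="Eq (Pls (Var 1) (Var 0)) (Pls (Var 0) (Var 1))"
     and x=0 and v="\<lambda>i. x" and P="\<lambda>y. x \<oplus> y = y \<oplus> x"])
     (simp_all add: Q(5) succ_left)

lemma add_lcomm: "x \<oplus> (y \<oplus> z) = y \<oplus> (x \<oplus> z)"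
  by (simp only: add_assoc[symmetric] add_comm[of x y])

lemmas add_ac = add_assoc add_comm add_lcomm

lemma add_cancel_right[simp]: "x \<oplus> z = y \<oplus> z \<longleftrightarrow> x = y"
proof -
  have "x \<oplus> z = y \<oplus> z \<longrightarrow> x = y"
    by (rule ind[where p="Impl (Eq (Pls (Var 1) (Var 0)) (Pls (Var 2) (Var 0))) (Eq (Var 1) (Var 2))"
     and x=0 and v="\<lambda>i. if i = 1 then x else y" and P="\<lambda>z. x \<oplus> z = y \<oplus> z \<longrightarrow> x = y"])
     (simp_all add: Q(5))
  thus ?thesis by blast
qed

lemma add_cancel_left[simp]: "z \<oplus> x = z \<oplus> y \<longleftrightarrow> x = y"
  by (simp only: add_comm[of z] add_cancel_right)

lemma add_eq_self[simp]: "x \<oplus> y = x \<longleftrightarrow> y = Z"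
  using add_cancel_left[of x y Z] by simp

lemma add_eq_self'[simp]: "y \<oplus> x = x \<longleftrightarrow> y = Z"
  using add_eq_self[of x y] by (simp only: add_comm[of x y])

lemma add_eq_0[simp]: "x \<oplus> y = Z \<longleftrightarrow> x = Z \<and> y = Z"
proof
  assume h: "x \<oplus> y = Z"
  have "y = Z"
  proof (rule ccontr)
    assume "y \<noteq> Z" then obtain w where "y = w \<oplus> o1" using Q3 by blast
    with h show False by (simp add: Q(5))
  qed
  with h show "x = Z \<and> y = Z" by simp
qed simp

lemma one_ne_0[simp]: "o1 \<noteq> Z" "Z \<noteq> o1"
  using Q1[of Z] Q1'[of Z] by simp_all

lemma mul_0_left[simp]: "Z \<otimes> a = Z"
  by (rule ind[where p="Eq (Tms Zr (Var 0)) Zr" and x=0 and v="\<lambda>_. Z" and P="\<lambda>a. Z \<otimes> a = Z"])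
     (simp_all add: Q7)

lemma mul_1_right[simp]: "x \<otimes> o1 = x"
  using Q7[of x Z] by simp

lemma distrib_left: "x \<otimes> (y \<oplus> z) = x \<otimes> y \<oplus> x \<otimes> z"
  by (rule ind[where p="Eq (Tms (Var 1) (Pls (Var 2) (Var 0))) (Pls (Tms (Var 1) (Var 2)) (Tms (Var 1) (Var 0)))"
     and x=0 and v="\<lambda>i. if i = 1 then x else y" and P="\<lambda>z. x \<otimes> (y \<oplus> z) = x \<otimes> y \<oplus> x \<otimes> z"])
     (simp_all add: Q7 Q(5), simp add: add_assoc)

lemma mul_succ_left: "(x \<oplus> o1) \<otimes> y = x \<otimes> y \<oplus> y"
  by (rule ind[where p="Eq (Tms (Pls (Var 1) On) (Var 0)) (Pls (Tms (Var 1) (Var 0)) (Var 0))"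
     and x=0 and v="\<lambda>i. x" and P="\<lambda>y. (x \<oplus> o1) \<otimes> y = x \<otimes> y \<oplus> y"])
     (simp_all add: Q7, simp add: add_ac)

lemma mul_comm: "x \<otimes> y = y \<otimes> x"
  by (rule ind[where p="Eq (Tms (Var 1) (Var 0)) (Tms (Var 0) (Var 1))"
     and x=0 and v="\<lambda>i. x" and P="\<lambda>y. x \<otimes> y = y \<otimes> x"])
     (simp_all add: Q7 mul_succ_left)

lemma distrib_right: "(y \<oplus> z) \<otimes> x = y \<otimes> x \<oplus> z \<otimes> x"
  by (simp only: mul_comm[of _ x] distrib_left)

lemma mul_assoc: "(x \<otimes> y) \<otimes> z = x \<otimes> (y \<otimes> z)"
  by (rule ind[where p="Eq (Tms (Tms (Var 1) (Var 2)) (Var 0)) (Tms (Var 1) (Tms (Var 2) (Var 0)))"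
     and x=0 and v="\<lambda>i. if i = 1 then x else y" and P="\<lambda>z. (x \<otimes> y) \<otimes> z = x \<otimes> (y \<otimes> z)"])
     (simp_all add: Q7 distrib_left)

lemma mul_lcomm: "x \<otimes> (y \<otimes> z) = y \<otimes> (x \<otimes> z)"
  by (simp only: mul_assoc[symmetric] mul_comm[of x y])

lemmas mul_ac = mul_assoc mul_comm mul_lcomm

lemma mul_1_left[simp]: "o1 \<otimes> x = x" by (simp only: mul_comm[of o1] mul_1_right)

lemma mul_eq_0[simp]: "x \<otimes> y = Z \<longleftrightarrow> x = Z \<or> y = Z"
proof
  assume h: "x \<otimes> y = Z"
  show "x = Z \<or> y = Z"
  proof (rule ccontr)
    assume "\<not> (x = Z \<or> y = Z)"
    then obtain w where "y = w \<oplus> o1" "x \<noteq> Z" using Q3 by blast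
    with h show False by (simp add: Q7)
  qed
qed auto

end

context isig begin

lemma add_eq_self_sym[simp]: "x = x \<oplus> y \<longleftrightarrow> y = Z" "x = y \<oplus> x \<longleftrightarrow> y = Z"
  by (metis add_eq_self)+ (metis add_eq_self')+
lemma Z_eq_add[simp]: "Z = x \<oplus> y \<longleftrightarrow> x = Z \<and> y = Z" by (metis add_eq_0)

lemma lt_iff: "x \<prec> y \<longleftrightarrow> x \<preceq> y \<and> x \<noteq> y" by (simp add: lt_def)

lemma le_refl[simp]: "x \<preceq> x" using leq_def[of x x] Q4 by blast
lemma le_add[simp]: "x \<preceq> x \<oplus> y" using leq_def by blast
lemma le_add'[simp]: "x \<preceq> y \<oplus> x" using leq_def add_comm by metis
lemma zero_le[simp]: "Z \<preceq> x" using leq_def add_0_left by blast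

lemma le_trans: "x \<preceq> y \<Longrightarrow> y \<preceq> z \<Longrightarrow> x \<preceq> z"
  unfolding leq_def by (metis add_assoc)

lemma le_antisym: "x \<preceq> y \<Longrightarrow> y \<preceq> x \<Longrightarrow> x = y"
proof -
  assume "x \<preceq> y" "y \<preceq> x"
  then obtain u w where u: "x \<oplus> u = y" and w: "y \<oplus> w = x" unfolding leq_def by blast
  hence "x \<oplus> (u \<oplus> w) = x" by (simp add: add_assoc[symmetric])
  hence "u = Z" by simp
  with u show ?thesis by simp
qed

lemma le_Z[simp]: "x \<preceq> Z \<longleftrightarrow> x = Z"
  using le_antisym zero_le le_refl by blast

lemma lt_succ_le: "x \<prec> y \<longleftrightarrow> x \<oplus> o1 \<preceq> y"
proof
  assume "x \<prec> y"
  then obtain u where u: "x \<oplus> u = y" "x \<noteq> y" unfolding lt_iff leq_def by blast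
  then have "u \<noteq> Z" by auto
  then obtain w where "u = w \<oplus> o1" using Q3 by blast
  with u show "x \<oplus> o1 \<preceq> y" unfolding leq_def by (metis add_assoc add_comm)
next
  assume "x \<oplus> o1 \<preceq> y"
  then obtain w where w: "x \<oplus> o1 \<oplus> w = y" unfolding leq_def by blast
  hence "x \<oplus> (o1 \<oplus> w) = y" by (simp add: add_assoc)
  moreover have "o1 \<oplus> w \<noteq> Z" by simp
  ultimately show "x \<prec> y" unfolding lt_iff leq_def by auto
qed

lemma le_total: "x \<preceq> y \<or> y \<preceq> x"
proof -
  have "x \<preceq> y \<or> y \<preceq> x"
  proof (rule ind[where p="Disj (Le (Var 1) (Var 0)) (Le (Var 0) (Var 1))"
     and x=0 and v="\<lambda>i. x" and P="\<lambda>y. x \<preceq> y \<or> y \<preceq> x"])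
    fix a assume "x \<preceq> a \<or> a \<preceq> x"
    thus "x \<preceq> a \<oplus> o1 \<or> a \<oplus> o1 \<preceq> x"
    proof
      assume "x \<preceq> a" thus ?thesis using le_trans le_add by blast
    next
      assume "a \<preceq> x"
      then obtain u where u: "a \<oplus> u = x" unfolding leq_def by blast
      show ?thesis
      proof (cases "u = Z")
        case True thus ?thesis using u by simp
      next
        case False then obtain w where "u = w \<oplus> o1" using Q3 by blast
        with u have "a \<oplus> o1 \<oplus> w = x" by (metis add_assoc add_comm)
        thus ?thesis unfolding leq_def by blast
      qed
    qed
  qed simp_all
  thus ?thesis .
qed

lemma not_le: "\<not> x \<preceq> y \<longleftrightarrow> y \<prec> x"
  using le_total le_antisym unfolding lt_iff by blast

lemma not_lt: "\<not> x \<prec> y \<longleftrightarrow> y \<preceq> x"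
  using not_le by blast

lemma lt_irrefl[simp]: "\<not> x \<prec> x" by (simp add: lt_iff)

lemma lt_imp_le: "x \<prec> y \<Longrightarrow> x \<preceq> y" by (simp add: lt_iff)

lemma lt_le_trans: "x \<prec> y \<Longrightarrow> y \<preceq> z \<Longrightarrow> x \<prec> z"
  using lt_succ_le le_trans by blast
lemma le_lt_trans: "x \<preceq> y \<Longrightarrow> y \<prec> z \<Longrightarrow> x \<prec> z"
  by (metis le_antisym le_trans lt_iff)
lemma lt_trans: "x \<prec> y \<Longrightarrow> y \<prec> z \<Longrightarrow> x \<prec> z"
  using lt_imp_le lt_le_trans by blast

lemma add_le_cancel_right[simp]: "x \<oplus> c \<preceq> y \<oplus> c \<longleftrightarrow> x \<preceq> y"
  unfolding leq_def by (metis add_assoc add_comm add_cancel_right)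
lemma add_le_cancel_left[simp]: "c \<oplus> x \<preceq> c \<oplus> y \<longleftrightarrow> x \<preceq> y"
  by (simp add: add_comm[of c])
lemma add_lt_cancel_right[simp]: "x \<oplus> c \<prec> y \<oplus> c \<longleftrightarrow> x \<prec> y"
  by (simp add: lt_iff)
lemma add_lt_cancel_left[simp]: "c \<oplus> x \<prec> c \<oplus> y \<longleftrightarrow> x \<prec> y"
  by (simp add: lt_iff)

lemma add_mono: "x \<preceq> y \<Longrightarrow> u \<preceq> w \<Longrightarrow> x \<oplus> u \<preceq> y \<oplus> w"
  by (meson add_le_cancel_left add_le_cancel_right le_trans)

lemma lt_succ: "x \<prec> y \<oplus> o1 \<longleftrightarrow> x \<preceq> y"
  by (simp add: lt_succ_le)

lemma zero_lt: "Z \<prec> x \<longleftrightarrow> x \<noteq> Z"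
  by (auto simp add: lt_iff)

lemma ge1: "x \<noteq> Z \<Longrightarrow> o1 \<preceq> x"
  using lt_succ_le zero_lt by fastforce

lemma mul_le_mono: "x \<preceq> y \<Longrightarrow> x \<otimes> c \<preceq> y \<otimes> c"
  unfolding leq_def by (metis distrib_right)

lemma mul_le_mono2: "x \<preceq> y \<Longrightarrow> c \<otimes> x \<preceq> c \<otimes> y"
  using mul_le_mono mul_comm by metis

lemma mul_mono: "x \<preceq> y \<Longrightarrow> u \<preceq> w \<Longrightarrow> x \<otimes> u \<preceq> y \<otimes> w"
  by (meson le_trans mul_le_mono mul_le_mono2)

lemma mul_lt_mono: "x \<prec> y \<Longrightarrow> c \<noteq> Z \<Longrightarrow> x \<otimes> c \<prec> y \<otimes> c"
proof -
  assume "x \<prec> y" "c \<noteq> Z"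
  then obtain u where u: "x \<oplus> u = y" "u \<noteq> Z" unfolding lt_iff leq_def by force
  hence "y \<otimes> c = x \<otimes> c \<oplus> u \<otimes> c" by (metis distrib_right)
  moreover have "u \<otimes> c \<noteq> Z" using u \<open>c \<noteq> Z\<close> by simp
  ultimately show ?thesis unfolding lt_iff leq_def by auto
qed

lemma mul_le_cancel: "c \<noteq> Z \<Longrightarrow> x \<otimes> c \<preceq> y \<otimes> c \<longleftrightarrow> x \<preceq> y"
  using mul_le_mono mul_lt_mono not_le by blast
lemma mul_le_cancel2: "c \<noteq> Z \<Longrightarrow> c \<otimes> x \<preceq> c \<otimes> y \<longleftrightarrow> x \<preceq> y"
  using mul_le_cancel mul_comm by metis
lemma mul_lt_cancel: "c \<noteq> Z \<Longrightarrow> x \<otimes> c \<prec> y \<otimes> c \<longleftrightarrow> x \<prec> y"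
  using mul_le_cancel not_le by blast
lemma mul_lt_cancel2: "c \<noteq> Z \<Longrightarrow> c \<otimes> x \<prec> c \<otimes> y \<longleftrightarrow> x \<prec> y"
  using mul_lt_cancel mul_comm by metis
lemma mul_cancel: "c \<noteq> Z \<Longrightarrow> x \<otimes> c = y \<otimes> c \<longleftrightarrow> x = y"
  using mul_le_cancel le_antisym le_refl by metis
lemma mul_cancel2: "c \<noteq> Z \<Longrightarrow> c \<otimes> x = c \<otimes> y \<longleftrightarrow> x = y"
  using mul_cancel mul_comm by metis

lemma le_mul: "c \<noteq> Z \<Longrightarrow> x \<preceq> x \<otimes> c"
  using mul_le_mono2[OF ge1, of c x] by simp
lemma le_mul': "c \<noteq> Z \<Longrightarrow> x \<preceq> c \<otimes> x"
  using le_mul mul_comm by metis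

lemma le_iff_lt_or_eq: "x \<preceq> y \<longleftrightarrow> x \<prec> y \<or> x = y"
  by (auto simp: lt_iff)

end

context isig begin

lemma lnp:
  assumes "delta0 p" "y \<noteq> x" "\<And>u a. sat M ((v(y:=u))(x:=a)) p = P a" "P c"
  shows "\<exists>c. P c \<and> (\<forall>d. d \<prec> c \<longrightarrow> \<not> P d)"
proof (rule ccontr)
  assume H: "\<not> (\<exists>c. P c \<and> (\<forall>d. d \<prec> c \<longrightarrow> \<not> P d))"
  have "\<forall>d. d \<preceq> n \<longrightarrow> \<not> P d" for n
  proof (rule ind[where p="BAll x (Var y) (Neg p)" and x=y and v=v and P="\<lambda>n. \<forall>d. d \<preceq> n \<longrightarrow> \<not> P d"])
    show "sigma1 (BAll x (Var y) (Neg p))" using assms(1) by simp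
    show "sat M (v(y := a)) (BAll x (Var y) (Neg p)) = (\<forall>d. d \<preceq> a \<longrightarrow> \<not> P d)" for a
      using assms(3) by simp
    show "\<forall>d. d \<preceq> Z \<longrightarrow> \<not> P d" using H by (auto simp: zero_lt lt_iff)
    fix a assume IH: "\<forall>d. d \<preceq> a \<longrightarrow> \<not> P d"
    show "\<forall>d. d \<preceq> a \<oplus> o1 \<longrightarrow> \<not> P d"
    proof (intro allI impI)
      fix d assume d: "d \<preceq> a \<oplus> o1"
      show "\<not> P d"
      proof (cases "d = a \<oplus> o1")
        case True
        show ?thesis
        proof
          assume "P d"
          then obtain d' where "d' \<prec> d" "P d'" using H by blast
          with True IH show False using lt_succ by blast
        qed
      next
        case False thus ?thesis using d IH lt_succ lt_iff by blast
      qed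
    qed
  qed
  thus False using assms(4) le_refl by blast
qed

lemma divmod: "p \<noteq> Z \<Longrightarrow> \<exists>q r. a = p \<otimes> q \<oplus> r \<and> r \<prec> p"
proof -
  assume p: "p \<noteq> Z"
  have "\<exists>q r. a = p \<otimes> q \<oplus> r \<and> r \<oplus> o1 \<preceq> p"
  proof (rule ind[where p="Ex 3 (Ex 4 (Conj (Eq (Var 0) (Pls (Tms (Var 1) (Var 3)) (Var 4))) (Le (Pls (Var 4) On) (Var 1))))"
     and x=0 and v="\<lambda>i. p" and P="\<lambda>a. \<exists>q r. a = p \<otimes> q \<oplus> r \<and> r \<oplus> o1 \<preceq> p"])
    show "\<exists>q r. Z = p \<otimes> q \<oplus> r \<and> r \<oplus> o1 \<preceq> p"
      using p by (auto intro!: exI[of _ Z] ge1)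
    fix a assume "\<exists>q r. a = p \<otimes> q \<oplus> r \<and> r \<oplus> o1 \<preceq> p"
    then obtain q r where qr: "a = p \<otimes> q \<oplus> r" "r \<oplus> o1 \<preceq> p" by blast
    show "\<exists>q r. a \<oplus> o1 = p \<otimes> q \<oplus> r \<and> r \<oplus> o1 \<preceq> p"
    proof (cases "r \<oplus> o1 = p")
      case True
      hence "a \<oplus> o1 = p \<otimes> (q \<oplus> o1) \<oplus> Z" using qr by (simp add: Q7 add_assoc)
      thus ?thesis using p ge1 by fastforce
    next
      case False
      hence "r \<oplus> o1 \<oplus> o1 \<preceq> p" using qr(2) lt_succ_le lt_iff by blast
      moreover have "a \<oplus> o1 = p \<otimes> q \<oplus> (r \<oplus> o1)" using qr by (simp add: add_assoc)
      ultimately show ?thesis by blast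
    qed
  qed simp_all
  thus ?thesis using lt_succ_le by blast
qed

abbreviation dv (infix "\<triangleleft>" 50) where "d \<triangleleft> a \<equiv> mdvd M d a"

lemma dvd_def': "d \<triangleleft> a \<longleftrightarrow> (\<exists>k. d \<otimes> k = a)" by (simp add: mdvd_def)

lemma dvd_le: "d \<triangleleft> a \<Longrightarrow> a \<noteq> Z \<Longrightarrow> d \<preceq> a"
  unfolding dvd_def' using le_mul by auto

lemma dvd_bounded: "d \<triangleleft> a \<longleftrightarrow> (\<exists>k. k \<preceq> a \<and> d \<otimes> k = a)"
proof
  assume "d \<triangleleft> a"
  then obtain k where k: "d \<otimes> k = a" unfolding dvd_def' by blast
  show "\<exists>k. k \<preceq> a \<and> d \<otimes> k = a"
  proof (cases "a = Z")
    case True thus ?thesis by (intro exI[of _ Z]) simp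
  next
    case False thus ?thesis using k le_mul' by (intro exI[of _ k]) auto
  qed
qed (auto simp: dvd_def')

lemma dvd_refl[simp]: "a \<triangleleft> a" unfolding dvd_def' by (metis mul_1_right)
lemma one_dvd[simp]: "o1 \<triangleleft> a" unfolding dvd_def' by simp
lemma dvd_0[simp]: "a \<triangleleft> Z" unfolding dvd_def' by (metis Q6)
lemma dvd_mulr[simp]: "a \<triangleleft> a \<otimes> b" unfolding dvd_def' by blast
lemma dvd_mull[simp]: "a \<triangleleft> b \<otimes> a" unfolding dvd_def' by (metis mul_comm)
lemma dvd_trans: "a \<triangleleft> b \<Longrightarrow> b \<triangleleft> c \<Longrightarrow> a \<triangleleft> c"
  unfolding dvd_def' by (metis mul_assoc)
lemma dvd_mult: "a \<triangleleft> b \<Longrightarrow> a \<triangleleft> b \<otimes> c"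
  using dvd_trans dvd_mulr by blast
lemma dvd_mult2: "a \<triangleleft> b \<Longrightarrow> a \<triangleleft> c \<otimes> b"
  using dvd_trans dvd_mull by blast
lemma dvd_mul_mono: "a \<triangleleft> b \<Longrightarrow> c \<triangleleft> d \<Longrightarrow> a \<otimes> c \<triangleleft> b \<otimes> d"
  unfolding dvd_def' by (metis mul_assoc mul_lcomm)
lemma dvd_add: "d \<triangleleft> a \<Longrightarrow> d \<triangleleft> b \<Longrightarrow> d \<triangleleft> a \<oplus> b"
  unfolding dvd_def' by (metis distrib_left)

lemma dvd_sub: "d \<triangleleft> a \<oplus> b \<Longrightarrow> d \<triangleleft> a \<Longrightarrow> d \<triangleleft> b"
proof -
  assume "d \<triangleleft> a \<oplus> b" "d \<triangleleft> a"
  then obtain k l where k: "d \<otimes> k = a" and l: "d \<otimes> l = a \<oplus> b" unfolding dvd_def' by blast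
  show ?thesis
  proof (cases "d = Z")
    case True
    hence "a = Z" using k by simp
    hence "b = Z" using l True by simp
    thus ?thesis by simp
  next
    case False
    have "d \<otimes> k \<preceq> d \<otimes> l" using k l by simp
    hence "k \<preceq> l" using mul_le_cancel2 False by blast
    then obtain w where w: "k \<oplus> w = l" unfolding leq_def by blast
    hence "d \<otimes> l = d \<otimes> k \<oplus> d \<otimes> w" by (simp only: distrib_left[symmetric])
    hence "d \<otimes> l = a \<oplus> d \<otimes> w" using k by simp
    hence "a \<oplus> d \<otimes> w = a \<oplus> b" using l by simp
    hence "d \<otimes> w = b" by simp
    thus ?thesis unfolding dvd_def' by blast
  qed
qed

lemma dvd_one: "d \<triangleleft> o1 \<Longrightarrow> d = o1"
proof -
  assume "d \<triangleleft> o1"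
  then obtain k where k: "d \<otimes> k = o1" unfolding dvd_def' by blast
  hence "d \<noteq> Z" "k \<noteq> Z" by auto
  hence "d \<preceq> o1" using k le_mul by metis
  moreover have "o1 \<preceq> d" using ge1 \<open>d \<noteq> Z\<close> .
  ultimately show ?thesis using le_antisym by blast
qed

abbreviation pr where "pr p \<equiv> mprime M p"

lemma prime_def': "pr p \<longleftrightarrow> o1 \<prec> p \<and> (\<forall>d. d \<triangleleft> p \<longrightarrow> d = o1 \<or> d = p)"
  by (simp add: mprime_def)

lemma prime_ne: "pr p \<Longrightarrow> p \<noteq> Z" "pr p \<Longrightarrow> p \<noteq> o1"
  by (auto simp: prime_def' lt_iff)

lemma prime_divisor: "o1 \<prec> a \<Longrightarrow> \<exists>q. pr q \<and> q \<triangleleft> a"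
proof -
  assume a: "o1 \<prec> a"
  have "\<exists>c. (o1 \<prec> c \<and> c \<triangleleft> a) \<and> (\<forall>d. d \<prec> c \<longrightarrow> \<not> (o1 \<prec> d \<and> d \<triangleleft> a))"
  proof (rule lnp[where p="Conj (Le (Pls On On) (Var 0)) (BEx 2 (Var 1) (Eq (Tms (Var 0) (Var 2)) (Var 1)))"
      and x=0 and y=3 and v="\<lambda>i. a" and c=a])
    show "sat M ((\<lambda>i. a)(3 := u, 0 := c)) (Conj (Le (Pls On On) (Var 0)) (BEx 2 (Var 1) (Eq (Tms (Var 0) (Var 2)) (Var 1))))
       = (o1 \<prec> c \<and> c \<triangleleft> a)" for u c
      by (simp add: lt_succ_le dvd_bounded)
  qed (use a in simp_all)
  then obtain c where c: "o1 \<prec> c" "c \<triangleleft> a" and min: "\<forall>d. d \<prec> c \<longrightarrow> \<not> (o1 \<prec> d \<and> d \<triangleleft> a)" by blast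
  have "pr c" unfolding prime_def'
  proof (intro conjI allI impI c(1))
    fix d assume d: "d \<triangleleft> c"
    have cz: "c \<noteq> Z" using c(1) lt_iff by auto
    have dz: "d \<noteq> Z" using d cz unfolding dvd_def' by auto
    show "d = o1 \<or> d = c"
    proof (rule ccontr)
      assume "\<not> (d = o1 \<or> d = c)"
      hence "o1 \<prec> d" "d \<prec> c" using ge1[OF dz] dvd_le[OF d cz] lt_iff by auto
      moreover have "d \<triangleleft> a" using dvd_trans d c(2) by blast
      ultimately show False using min by blast
    qed
  qed
  thus ?thesis using c by blast
qed

lemma euclid: "pr p \<Longrightarrow> p \<triangleleft> a \<otimes> b \<Longrightarrow> p \<triangleleft> a \<or> p \<triangleleft> b"
proof (rule ccontr)
  assume p: "pr p" and ab: "p \<triangleleft> a \<otimes> b" and H: "\<not> (p \<triangleleft> a \<or> p \<triangleleft> b)"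
  have pz: "p \<noteq> Z" using prime_ne p by blast
  have "\<exists>c. (Z \<prec> c \<and> p \<triangleleft> c \<otimes> b) \<and> (\<forall>d. d \<prec> c \<longrightarrow> \<not> (Z \<prec> d \<and> p \<triangleleft> d \<otimes> b))"
  proof (rule lnp[where p="Conj (Le On (Var 0)) (BEx 3 (Tms (Var 0) (Var 2)) (Eq (Tms (Var 1) (Var 3)) (Tms (Var 0) (Var 2))))"
      and x=0 and y=4 and v="\<lambda>i. if i = 1 then p else b" and c=p])
    show "sat M ((\<lambda>i. if i = 1 then p else b)(4 := u, 0 := c)) (Conj (Le On (Var 0)) (BEx 3 (Tms (Var 0) (Var 2)) (Eq (Tms (Var 1) (Var 3)) (Tms (Var 0) (Var 2)))))
       = (Z \<prec> c \<and> p \<triangleleft> c \<otimes> b)" for u c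
      by (simp add: dvd_bounded zero_lt) (metis ge1 le_Z one_ne_0(1))
  qed (use pz in \<open>simp_all add: zero_lt\<close>)
  then obtain c where c: "Z \<prec> c" "p \<triangleleft> c \<otimes> b" and min: "\<forall>d. d \<prec> c \<longrightarrow> \<not> (Z \<prec> d \<and> p \<triangleleft> d \<otimes> b)" by blast
  have key: "p \<triangleleft> r \<otimes> b" if "x = y \<otimes> q \<oplus> r" "p \<triangleleft> x \<otimes> b" "p \<triangleleft> y \<otimes> b" for x y q r
  proof -
    have "x \<otimes> b = (y \<otimes> b) \<otimes> q \<oplus> r \<otimes> b" using that(1) by (simp add: distrib_right distrib_left mul_ac)
    moreover have "p \<triangleleft> (y \<otimes> b) \<otimes> q" using that(3) dvd_mult by blast
    ultimately show ?thesis using dvd_sub that(2) by metis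
  qed
  have cp: "c \<preceq> p"
  proof (rule ccontr)
    assume "\<not> c \<preceq> p"
    hence "p \<prec> c" using not_le by blast
    moreover have "Z \<prec> p" using pz zero_lt by blast
    moreover have "p \<triangleleft> p \<otimes> b" by simp
    ultimately show False using min by blast
  qed
  obtain q r where qr: "p = c \<otimes> q \<oplus> r" "r \<prec> c" using divmod c(1) zero_lt by blast
  have "p \<triangleleft> r \<otimes> b" using key[OF qr(1) _ c(2)] by simp
  hence "r = Z" using min qr(2) zero_lt by blast
  hence "c \<triangleleft> p" using qr(1) unfolding dvd_def' by auto
  hence "c = o1 \<or> c = p" using p prime_def' by blast
  moreover have "c \<noteq> o1" using c(2) H by auto
  ultimately have cp: "c = p" by blast
  obtain q' r' where qr': "a = p \<otimes> q' \<oplus> r'" "r' \<prec> p" using divmod pz by blast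
  have "p \<triangleleft> r' \<otimes> b" using key[OF qr'(1) _ ] ab by (simp add: mul_assoc)
  hence "r' = Z" using min qr'(2) cp zero_lt by blast
  hence "p \<triangleleft> a" using qr'(1) by simp
  thus False using H by blast
qed

end

fun pw :: "'a Lstr \<Rightarrow> 'a \<Rightarrow> nat \<Rightarrow> 'a" where
  "pw M x 0 = one M"
| "pw M x (Suc n) = mul M (pw M x n) x"

context isig begin

lemmas [trans] = le_trans lt_le_trans le_lt_trans lt_trans

lemma Z_eq_mul[simp]: "Z = x \<otimes> y \<longleftrightarrow> x = Z \<or> y = Z" by (metis mul_eq_0)

abbreviation sqf where "sqf r \<equiv> msquarefree M r"

lemma pw_add: "pw M x (m + n) = pw M x m \<otimes> pw M x n"
  by (induct n) (simp_all add: mul_ac)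

lemma pw_mult: "pw M x (m * n) = pw M (pw M x m) n"
  by (induct n) (simp_all add: pw_add mul_ac)

lemma pw_distrib: "pw M (x \<otimes> y) n = pw M x n \<otimes> pw M y n"
  by (induct n) (simp_all add: mul_ac)

lemma pw_1[simp]: "pw M x 1 = x" by simp

lemma pw_ne_0: "x \<noteq> Z \<Longrightarrow> pw M x n \<noteq> Z"
  by (induct n) simp_all

lemma pw_mono: "x \<preceq> y \<Longrightarrow> pw M x n \<preceq> pw M y n"
  by (induct n) (simp_all add: mul_mono)

lemma pw_strict: "x \<prec> y \<Longrightarrow> 0 < n \<Longrightarrow> pw M x n \<prec> pw M y n"
proof (induct n)
  case 0 thus ?case by simp
next
  case (Suc n)
  show ?case
  proof (cases n)
    case 0 thus ?thesis using Suc by simp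
  next
    case (Suc k)
    hence IH: "pw M x n \<prec> pw M y n" using Suc.hyps Suc.prems by simp
    have yz: "y \<noteq> Z" using Suc.prems(1) zero_lt le_lt_trans zero_le by blast
    have "pw M x n \<otimes> x \<preceq> pw M x n \<otimes> y" using mul_le_mono2 lt_imp_le Suc.prems(1) by blast
    also have "pw M x n \<otimes> y \<prec> pw M y n \<otimes> y" using mul_lt_mono IH yz by blast
    finally show ?thesis by simp
  qed
qed

lemma pw_le_cancel: "pw M x n \<preceq> pw M y n \<Longrightarrow> 0 < n \<Longrightarrow> x \<preceq> y"
  using pw_strict not_le by blast

lemma pw_lt_cancel: "pw M x n \<prec> pw M y n \<Longrightarrow> x \<prec> y"
  using pw_mono not_le by blast

lemma pw_ge: "x \<noteq> Z \<Longrightarrow> 0 < n \<Longrightarrow> x \<preceq> pw M x n"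
proof (induct n)
  case (Suc n) thus ?case
    by (cases n) (simp_all add: le_mul' pw_ne_0)
qed simp

lemma pw_mono_exp: "x \<noteq> Z \<Longrightarrow> m \<le> n \<Longrightarrow> pw M x m \<preceq> pw M x n"
proof -
  assume "x \<noteq> Z" "m \<le> n"
  then obtain k where "n = m + k" using le_Suc_ex by blast
  thus ?thesis using \<open>x \<noteq> Z\<close> by (simp add: pw_add le_mul pw_ne_0)
qed

lemma prime_dvd_pw: "pr p \<Longrightarrow> p \<triangleleft> pw M x n \<Longrightarrow> p \<triangleleft> x"
proof (induct n)
  case 0 thus ?case using dvd_one prime_ne by auto
next
  case (Suc n) thus ?case using euclid by auto
qed

lemma dvd_pw: "0 < n \<Longrightarrow> x \<triangleleft> pw M x n"
  by (cases n) simp_all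

lemma sqf_def': "sqf r \<longleftrightarrow> (\<forall>d. d \<otimes> d \<triangleleft> r \<longrightarrow> d = o1)"
  by (simp add: msquarefree_def)

lemma sqf_bounded: "sqf r \<longleftrightarrow> (\<forall>d k. d \<preceq> r \<longrightarrow> k \<preceq> r \<longrightarrow> d \<otimes> d \<otimes> k = r \<longrightarrow> d = o1)"
proof
  assume "sqf r" thus "\<forall>d k. d \<preceq> r \<longrightarrow> k \<preceq> r \<longrightarrow> d \<otimes> d \<otimes> k = r \<longrightarrow> d = o1"
    unfolding sqf_def' dvd_def' by blast
next
  assume H: "\<forall>d k. d \<preceq> r \<longrightarrow> k \<preceq> r \<longrightarrow> d \<otimes> d \<otimes> k = r \<longrightarrow> d = o1"
  have rz: "r \<noteq> Z"
  proof
    assume "r = Z" thus False using H[rule_format, of Z Z] by simp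
  qed
  show "sqf r" unfolding sqf_def' dvd_def'
  proof (intro allI impI)
    fix d assume "\<exists>k. d \<otimes> d \<otimes> k = r"
    then obtain k where k: "d \<otimes> d \<otimes> k = r" by blast
    hence dz: "d \<noteq> Z" and kz: "k \<noteq> Z" using rz by auto
    have "k \<preceq> r" using k le_mul' dz by (metis mul_eq_0)
    moreover have "d \<preceq> r" using k le_mul dz kz by (metis le_trans mul_assoc mul_eq_0)
    ultimately show "d = o1" using H k by blast
  qed
qed

lemma sqf_one: "sqf o1"
  unfolding sqf_def' by (meson dvd_one dvd_trans dvd_mulr)

lemma sqf_ne: "sqf r \<Longrightarrow> r \<noteq> Z"
proof
  assume "sqf r" "r = Z"
  hence "Z = o1" using sqf_def' dvd_0 by metis
  thus False by simp
qed

lemma sqf_dvd: "sqf r \<Longrightarrow> q \<otimes> q \<triangleleft> r \<Longrightarrow> q = o1"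
  unfolding sqf_def' by blast

lemma sqf_mul_prime:
  assumes p: "pr p" and npr: "\<not> p \<triangleleft> r" and r: "sqf r"
  shows "sqf (p \<otimes> r)"
  unfolding sqf_def'
proof (intro allI impI)
  fix d assume dd: "d \<otimes> d \<triangleleft> p \<otimes> r"
  have pz: "p \<noteq> Z" using p prime_ne by blast
  have rz: "r \<noteq> Z" using sqf_ne r by blast
  show "d = o1"
  proof (rule ccontr)
    assume d1: "d \<noteq> o1"
    have dz: "d \<noteq> Z"
    proof
      assume "d = Z"
      then obtain k where "Z = p \<otimes> r" using dd unfolding dvd_def' by auto
      thus False using pz rz by simp
    qed
    have "o1 \<prec> d" using d1 dz ge1 lt_iff by auto
    then obtain q where q: "pr q" "q \<triangleleft> d" using prime_divisor by blast
    have qq: "q \<otimes> q \<triangleleft> p \<otimes> r" using dvd_trans[OF dvd_mul_mono[OF q(2) q(2)] dd] .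
    show False
    proof (cases "q = p")
      case True
      then obtain k where "p \<otimes> p \<otimes> k = p \<otimes> r" using qq unfolding dvd_def' by blast
      hence "p \<otimes> k = r" using pz by (simp add: mul_assoc mul_cancel2)
      thus False using npr unfolding dvd_def' by blast
    next
      case False
      have "q \<triangleleft> p \<otimes> r" using dvd_trans[OF dvd_mulr qq] .
      hence "q \<triangleleft> p \<or> q \<triangleleft> r" using euclid q(1) by blast
      moreover have "\<not> q \<triangleleft> p" using p False prime_ne(2)[OF q(1)] unfolding prime_def' by blast
      ultimately have "q \<triangleleft> r" by blast
      then obtain r' where r': "r = q \<otimes> r'" unfolding dvd_def' by metis
      obtain k where "q \<otimes> q \<otimes> k = p \<otimes> r" using qq unfolding dvd_def' by blast
      hence "q \<otimes> (q \<otimes> k) = q \<otimes> (p \<otimes> r')" using r' by (simp add: mul_ac)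
      hence "q \<otimes> k = p \<otimes> r'" using prime_ne(1)[OF q(1)] mul_cancel2 by blast
      hence "q \<triangleleft> p \<otimes> r'" unfolding dvd_def' by blast
      hence "q \<triangleleft> r'" using euclid q(1) \<open>\<not> q \<triangleleft> p\<close> by blast
      hence "q \<otimes> q \<triangleleft> r" using r' dvd_mul_mono dvd_refl by metis
      hence "q = o1" using sqf_dvd r by blast
      thus False using prime_ne(2) q(1) by blast
    qed
  qed
qed

lemma rad_exists:
  assumes mz: "m \<noteq> Z"
  shows "\<exists>r. r \<triangleleft> m \<and> sqf r \<and> (\<forall>p. pr p \<and> p \<triangleleft> m \<longrightarrow> p \<triangleleft> r)"
proof -
  let ?P = "\<lambda>k. \<exists>d. d \<preceq> m \<and> d \<oplus> k = m \<and> sqf d \<and> d \<triangleleft> m"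
  obtain k1 where k1: "m = k1 \<oplus> o1" using Q3 mz by blast
  have "\<exists>c. ?P c \<and> (\<forall>d. d \<prec> c \<longrightarrow> \<not> ?P d)"
  proof (rule lnp[where p="BEx 1 (Var 2) (Conj (Eq (Pls (Var 1) (Var 0)) (Var 2)) (Conj
          (BAll 3 (Var 1) (BAll 4 (Var 1) (Impl (Eq (Tms (Tms (Var 3) (Var 3)) (Var 4)) (Var 1)) (Eq (Var 3) On))))
          (BEx 3 (Var 2) (Eq (Tms (Var 1) (Var 3)) (Var 2)))))"
      and x=0 and y=5 and v="\<lambda>i. m" and c=k1])
    show "sat M ((\<lambda>i. m)(5 := u, 0 := c)) (BEx 1 (Var 2) (Conj (Eq (Pls (Var 1) (Var 0)) (Var 2)) (Conj
          (BAll 3 (Var 1) (BAll 4 (Var 1) (Impl (Eq (Tms (Tms (Var 3) (Var 3)) (Var 4)) (Var 1)) (Eq (Var 3) On))))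
          (BEx 3 (Var 2) (Eq (Tms (Var 1) (Var 3)) (Var 2)))))) = ?P c" for u c
      by (simp add: sqf_bounded dvd_bounded)
    show "?P k1" using k1 sqf_one by (intro exI[of _ o1]) (auto simp: add_comm ge1 mz)
  qed simp_all
  then obtain k0 d0 where d0: "d0 \<oplus> k0 = m" "sqf d0" "d0 \<triangleleft> m"
    and min: "\<forall>d. d \<prec> k0 \<longrightarrow> \<not> ?P d" by blast
  have max: "d \<preceq> d0" if "sqf d" "d \<triangleleft> m" for d
  proof -
    have "d \<preceq> m" using that dvd_le mz by blast
    then obtain k' where k': "d \<oplus> k' = m" unfolding leq_def by blast
    hence "?P k'" using that \<open>d \<preceq> m\<close> by blast
    hence "k0 \<preceq> k'" using min not_lt by blast
    then obtain w where "k0 \<oplus> w = k'" unfolding leq_def by blast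
    hence "d \<oplus> w \<oplus> k0 = d0 \<oplus> k0" using k' d0(1) by (simp add: add_ac)
    hence "d \<oplus> w = d0" by simp
    thus ?thesis unfolding leq_def by blast
  qed
  have "\<forall>p. pr p \<and> p \<triangleleft> m \<longrightarrow> p \<triangleleft> d0"
  proof (intro allI impI, rule ccontr)
    fix p assume p: "pr p \<and> p \<triangleleft> m" and np: "\<not> p \<triangleleft> d0"
    obtain j where j: "m = d0 \<otimes> j" using d0(3) unfolding dvd_def' by metis
    have "p \<triangleleft> j" using euclid p np j by metis
    then obtain j' where "j = p \<otimes> j'" unfolding dvd_def' by metis
    hence "p \<otimes> d0 \<triangleleft> m" using j unfolding dvd_def' by (metis mul_ac)
    moreover have "sqf (p \<otimes> d0)" using sqf_mul_prime p np d0(2) by blast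
    ultimately have "p \<otimes> d0 \<preceq> o1 \<otimes> d0" using max by simp
    hence "p \<preceq> o1" using mul_le_cancel sqf_ne d0(2) by blast
    thus False using p prime_def' not_le by blast
  qed
  thus ?thesis using d0 by blast
qed

end

context isig begin

lemma nm_add: "nm M (m + n) = nm M m \<oplus> nm M n"
  by (induct n) (simp_all add: add_assoc)

lemma nm_1[simp]: "nm M 1 = o1" by simp

lemma nm_mul: "nm M (m * n) = nm M m \<otimes> nm M n"
  by (induct n) (simp_all add: nm_add Q7, simp add: add_comm)

lemma nm_pw: "nm M (c ^ n) = pw M (nm M c) n"
  by (induct n) (simp_all add: nm_mul mul_comm)

lemma nm_le: "m \<le> n \<Longrightarrow> nm M m \<preceq> nm M n"
  by (metis le_add le_add_diff_inverse nm_add)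

lemma nm_lt: "m < n \<Longrightarrow> nm M m \<prec> nm M n"
proof -
  assume "m < n"
  then have "Suc m \<le> n" by simp
  hence "nm M m \<oplus> o1 \<preceq> nm M n" using nm_le by fastforce
  thus ?thesis using lt_succ_le by blast
qed

lemma below_std: "x \<prec> nm M n \<Longrightarrow> \<exists>j<n. x = nm M j"
proof (induct n)
  case 0 thus ?case by (simp add: lt_iff)
next
  case (Suc n)
  hence "x \<preceq> nm M n" using lt_succ by simp
  hence "x \<prec> nm M n \<or> x = nm M n" using le_iff_lt_or_eq by blast
  thus ?case using Suc.hyps less_Suc_eq by blast
qed

lemma nm_inj: "nm M i = nm M j \<Longrightarrow> i = j"
  by (metis lt_iff nat_neq_iff nm_lt)

lemma two_pow_ge: "o1 \<prec> x \<Longrightarrow> nm M (2 ^ n) \<preceq> pw M x n"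
proof -
  assume "o1 \<prec> x"
  hence "nm M 2 \<preceq> x" using lt_succ_le by (simp add: numeral_2_eq_2)
  hence "pw M (nm M 2) n \<preceq> pw M x n" using pw_mono by blast
  thus ?thesis by (simp add: nm_pw)
qed

lemma coprime_one: "mcoprime M a o1" "mcoprime M o1 a"
  unfolding mcoprime_def using dvd_one by blast+

lemma coprime_succ: "mcoprime M a (a \<oplus> o1)"
  unfolding mcoprime_def using dvd_one dvd_sub by blast

end

locale expc = isig +
  fixes A e
  assumes EP: "ExpPrime M A e"
begin

lemma PS: "presburger_sub M A" using EP unfolding ExpPrime_def by blast

lemma A0: "Z \<in> A" using PS unfolding presburger_sub_def by (elim conjE)
lemma A1: "o1 \<in> A" using PS unfolding presburger_sub_def by (elim conjE)
lemma Aadd: "x \<in> A \<Longrightarrow> y \<in> A \<Longrightarrow> x \<oplus> y \<in> A"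
  using PS unfolding presburger_sub_def by (elim conjE) blast
lemma Apred: "x \<in> A \<Longrightarrow> x \<noteq> Z \<Longrightarrow> \<exists>z\<in>A. x = z \<oplus> o1"
  using PS unfolding presburger_sub_def by (elim conjE) blast
lemma Ale: "x \<in> A \<Longrightarrow> y \<in> A \<Longrightarrow> x \<preceq> y \<longleftrightarrow> (\<exists>z\<in>A. x \<oplus> z = y)"
  using PS unfolding presburger_sub_def by (elim conjE) blast
lemma Adiv: "0 < n \<Longrightarrow> x \<in> A \<Longrightarrow> \<exists>y\<in>A. madd M n y \<preceq> x \<and> x \<prec> madd M n (y \<oplus> o1)"
  using PS unfolding presburger_sub_def by (elim conjE) blast

lemma EA: "\<forall>x. \<forall>y\<in>A. \<forall>z\<in>A.
        ((x = o1 \<or> y = Z) \<longleftrightarrow> e x y = o1) \<and>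
        (x \<noteq> Z \<longrightarrow> e x y \<noteq> Z) \<and>
        e x o1 = x \<and>
        e x (y \<oplus> z) = e x y \<otimes> e x z" using EP unfolding ExpPrime_def by blast

lemma e0: "e x Z = o1" using EA A0 by blast
lemma e_ne: "y \<in> A \<Longrightarrow> x \<noteq> Z \<Longrightarrow> e x y \<noteq> Z" using EA A0 by blast
lemma e1: "e x o1 = x" using EA A0 by blast
lemma eadd: "y \<in> A \<Longrightarrow> z \<in> A \<Longrightarrow> e x (y \<oplus> z) = e x y \<otimes> e x z" using EA by blast

lemma nm_A: "nm M n \<in> A"
  by (induct n) (simp_all add: A0 A1 Aadd)

lemma e_nm: "e x (nm M n) = pw M x n"
  by (induct n) (simp_all add: e0 eadd nm_A A1 e1)

lemma madd_A: "q \<in> A \<Longrightarrow> madd M n q \<in> A"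
  by (induct n) (simp_all add: A0 Aadd)

lemma madd_Z: "madd M n Z = Z"
  by (induct n) simp_all

lemma madd_succ: "madd M n (y \<oplus> o1) = madd M n y \<oplus> nm M n"
  by (induct n) (simp_all add: add_ac)

lemma e_madd: "q \<in> A \<Longrightarrow> e x (madd M n q) = pw M (e x q) n"
  by (induct n) (simp_all add: e0 eadd madd_A)

lemma std_exp:
  assumes x: "o1 \<prec> x" and a: "a \<in> A" and U: "e x a \<preceq> nm M B"
  shows "\<exists>j. a = nm M j"
proof (cases "a \<prec> nm M B")
  case True thus ?thesis using below_std by blast
next
  case False
  hence "nm M B \<preceq> a" using not_lt by blast
  then obtain d where d: "d \<in> A" "nm M B \<oplus> d = a" using Ale[OF nm_A a] by blast
  have xz: "x \<noteq> Z" using x by (auto simp: lt_iff)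
  have "e x a = e x (nm M B) \<otimes> e x d" using eadd[OF nm_A d(1), of x B] d(2) by simp
  hence ea: "e x a = pw M x B \<otimes> e x d" by (simp add: e_nm)
  have "e x d \<noteq> Z" using e_ne d(1) xz .
  hence "pw M x B \<preceq> pw M x B \<otimes> e x d" by (rule le_mul)
  hence "pw M x B \<preceq> e x a" using ea by simp
  moreover have "nm M B \<prec> nm M (2 ^ B)" by (rule nm_lt) (rule less_exp)
  moreover have "nm M (2 ^ B) \<preceq> pw M x B" using two_pow_ge[OF x] .
  ultimately have "nm M B \<prec> e x a" using lt_le_trans le_trans by blast
  thus ?thesis using U not_le by blast
qed

lemma decomp5:
  assumes a: "a \<in> A" and a5: "nm M 5 \<preceq> a"
  shows "\<exists>q\<in>A. \<exists>j<5. a = madd M 5 q \<oplus> nm M (5 + j)"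
proof -
  have "\<exists>y\<in>A. madd M 5 y \<preceq> a \<and> a \<prec> madd M 5 (y \<oplus> o1)" using Adiv[of 5 a] a by simp
  then obtain y where y: "y \<in> A" "madd M 5 y \<preceq> a" "a \<prec> madd M 5 (y \<oplus> o1)" by blast
  obtain r where r: "r \<in> A" "madd M 5 y \<oplus> r = a" using Ale[OF madd_A[OF y(1)] a] y(2) by blast
  have "madd M 5 y \<oplus> r \<prec> madd M 5 y \<oplus> nm M 5" using y(3) r(2) madd_succ[of 5 y] by simp
  hence "r \<prec> nm M 5" by (simp only: add_lt_cancel_left)
  then obtain j where j: "j < 5" "r = nm M j" using below_std by blast
  have "y \<noteq> Z"
  proof
    assume yz: "y = Z"
    have "a = madd M 5 y \<oplus> nm M j" using r(2) j(2) by simp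
    hence "a = nm M j" using yz madd_Z[of 5] by simp
    moreover have "nm M j \<prec> nm M 5" using nm_lt j(1) by blast
    ultimately show False using a5 not_lt by blast
  qed
  then obtain q where q: "q \<in> A" "y = q \<oplus> o1" using Apred y by blast
  have "a = madd M 5 (q \<oplus> o1) \<oplus> nm M j" using r(2) q(2) j(2) by simp
  also have "\<dots> = madd M 5 q \<oplus> (nm M 5 \<oplus> nm M j)" by (simp only: madd_succ add_assoc)
  also have "\<dots> = madd M 5 q \<oplus> nm M (5 + j)" by (simp only: nm_add)
  finally show ?thesis using q j by blast
qed

lemma repr:
  assumes x: "o1 \<prec> x" and a: "a \<in> A" and a1: "o1 \<prec> a"
  shows "(\<exists>j. 2 \<le> j \<and> j < 5 \<and> a = nm M j) \<or>
    (\<exists>\<alpha>. \<alpha> \<noteq> Z \<and> \<alpha> \<triangleleft> e x a \<and> pw M \<alpha> 5 \<preceq> e x a \<and> (\<forall>p. pr p \<and> p \<triangleleft> e x a \<longrightarrow> p \<triangleleft> \<alpha>))"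
proof (cases "nm M 5 \<preceq> a")
  case False
  hence "a \<prec> nm M 5" using not_le by blast
  then obtain j where j: "j < 5" "a = nm M j" using below_std by blast
  have "\<not> j < 2"
  proof
    assume "j < 2" hence "j = 0 \<or> j = 1" by arith
    thus False using a1 j by (auto simp: lt_iff)
  qed
  hence "2 \<le> j" by simp
  thus ?thesis using j by blast
next
  case True
  then obtain q j where q: "q \<in> A" "j < 5" "a = madd M 5 q \<oplus> nm M (5 + j)" using decomp5 a by blast
  have xz: "x \<noteq> Z" using x by (auto simp: lt_iff)
  define X where "X = e x q"
  have Xz: "X \<noteq> Z" unfolding X_def using e_ne[OF q(1) xz] .
  have U: "e x a = pw M X 5 \<otimes> pw M x (5 + j)"
  proof -
    have "e x a = e x (madd M 5 q) \<otimes> e x (nm M (5 + j))"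
      unfolding q(3) by (rule eadd[OF madd_A[OF q(1)] nm_A])
    thus ?thesis unfolding e_madd[OF q(1)] e_nm X_def .
  qed
  have "x \<otimes> X \<noteq> Z" using xz Xz by simp
  moreover have "x \<otimes> X \<triangleleft> e x a"
  proof -
    have "X \<otimes> x \<triangleleft> pw M X 5 \<otimes> pw M x (5 + j)"
      by (rule dvd_mul_mono) (rule dvd_pw, simp)+
    thus ?thesis unfolding U by (simp only: mul_comm[of X x])
  qed
  moreover have "pw M (x \<otimes> X) 5 \<preceq> e x a"
  proof -
    have "pw M (x \<otimes> X) 5 = pw M X 5 \<otimes> pw M x 5" by (simp only: pw_distrib mul_comm)
    also have "\<dots> \<preceq> pw M X 5 \<otimes> pw M x (5 + j)"
      by (rule mul_le_mono2) (rule pw_mono_exp[OF xz], simp)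
    finally show ?thesis unfolding U .
  qed
  moreover have "\<forall>p. pr p \<and> p \<triangleleft> e x a \<longrightarrow> p \<triangleleft> x \<otimes> X"
  proof (intro allI impI)
    fix p assume p: "pr p \<and> p \<triangleleft> e x a"
    hence "p \<triangleleft> pw M X 5 \<otimes> pw M x (5 + j)" unfolding U by blast
    hence "p \<triangleleft> pw M X 5 \<or> p \<triangleleft> pw M x (5 + j)" using euclid p by blast
    hence "p \<triangleleft> X \<or> p \<triangleleft> x" using prime_dvd_pw p by blast
    thus "p \<triangleleft> x \<otimes> X" using dvd_mult dvd_mult2 by blast
  qed
  ultimately show ?thesis by blast
qed

end

context isig begin

lemma pw3: "pw M U 3 = U \<otimes> (U \<otimes> U)"
  by (simp add: numeral_3_eq_3 mul_assoc)

lemma pw4: "pw M U 4 = (U \<otimes> U) \<otimes> (U \<otimes> U)"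
proof -
  have "(4::nat) = Suc (Suc (Suc (Suc 0)))" by simp
  thus ?thesis by (simp only: pw.simps mul_1_left mul_assoc)
qed

lemma pw_split: "n \<le> m \<Longrightarrow> pw M U m = pw M U (m - n) \<otimes> pw M U n"
  using pw_add[of U "m - n" n] by simp

lemma chase:
  assumes Uz: "U \<noteq> Z" and H: "pw M U 3 \<prec> k \<otimes> (pw M \<alpha> 4 \<otimes> pw M \<beta> 4)"
    and ha: "pw M \<alpha> 20 \<preceq> pw M U s" and hb: "pw M \<beta> 20 \<preceq> pw M U t" and st: "s + t < 15"
  shows "U \<prec> pw M k 5"
proof -
  have "pw M (pw M U 3) 5 \<prec> pw M (k \<otimes> (pw M \<alpha> 4 \<otimes> pw M \<beta> 4)) 5"
    using pw_strict[OF H] by simp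
  hence "pw M U 15 \<prec> pw M k 5 \<otimes> (pw M \<alpha> 20 \<otimes> pw M \<beta> 20)"
    using pw_mult[of U 3 5] pw_mult[of \<alpha> 4 5] pw_mult[of \<beta> 4 5] by (simp add: pw_distrib)
  also have "\<dots> \<preceq> pw M k 5 \<otimes> (pw M U s \<otimes> pw M U t)"
    by (rule mul_le_mono2, rule mul_mono[OF ha hb])
  also have "\<dots> = pw M k 5 \<otimes> pw M U (s + t)" by (simp add: pw_add)
  finally have "pw M U (15 - (s + t)) \<otimes> pw M U (s + t) \<prec> pw M k 5 \<otimes> pw M U (s + t)"
    using pw_split[of "s + t" 15 U] st by simp
  hence "pw M U (15 - (s + t)) \<prec> pw M k 5" using mul_lt_cancel pw_ne_0[OF Uz] by blast
  moreover have "U \<preceq> pw M U (15 - (s + t))" using pw_ge[OF Uz] st by simp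
  ultimately show ?thesis using le_lt_trans by blast
qed

lemma chase2:
  assumes Uz: "U \<noteq> Z" and az: "\<alpha> \<noteq> Z" and H: "pw M U 3 \<prec> k \<otimes> (pw M \<alpha> 4 \<otimes> pw M \<beta> 4)"
    and a2: "pw M \<alpha> 2 \<preceq> U" and a4: "U \<preceq> pw M \<alpha> 4" and hb: "pw M \<beta> 20 \<preceq> pw M U 4"
  shows "U \<preceq> pw M (pw M k 5) 2"
proof -
  have "pw M (pw M U 3) 5 \<prec> pw M (k \<otimes> (pw M \<alpha> 4 \<otimes> pw M \<beta> 4)) 5"
    using pw_strict[OF H] by simp
  hence "pw M U 15 \<prec> pw M k 5 \<otimes> (pw M \<alpha> 20 \<otimes> pw M \<beta> 20)"
    using pw_mult[of U 3 5] pw_mult[of \<alpha> 4 5] pw_mult[of \<beta> 4 5] by (simp add: pw_distrib)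
  also have "\<dots> \<preceq> pw M k 5 \<otimes> (pw M \<alpha> 20 \<otimes> pw M U 4)"
    by (rule mul_le_mono2, rule mul_le_mono2[OF hb])
  finally have "pw M U 11 \<otimes> pw M U 4 \<prec> (pw M k 5 \<otimes> pw M \<alpha> 20) \<otimes> pw M U 4"
    using pw_add[of U 11 4] by (simp add: mul_assoc)
  hence "pw M U 11 \<prec> pw M k 5 \<otimes> pw M \<alpha> 20" using mul_lt_cancel pw_ne_0[OF Uz] by blast
  moreover have "pw M (pw M \<alpha> 2) 11 \<preceq> pw M U 11" using pw_mono[OF a2] .
  ultimately have "pw M \<alpha> 2 \<otimes> pw M \<alpha> 20 \<prec> pw M k 5 \<otimes> pw M \<alpha> 20"
    using pw_mult[of \<alpha> 2 11] pw_add[of \<alpha> 2 20] le_lt_trans by simp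
  hence "pw M \<alpha> 2 \<prec> pw M k 5" using mul_lt_cancel pw_ne_0[OF az] by blast
  hence "pw M (pw M \<alpha> 2) 2 \<preceq> pw M (pw M k 5) 2" using pw_mono lt_imp_le by blast
  hence "pw M \<alpha> 4 \<preceq> pw M (pw M k 5) 2" using pw_mult[of \<alpha> 2 2] by simp
  thus ?thesis using a4 le_trans by blast
qed

lemma abc_apply:
  assumes abc: "abc_third M K" and UV: "U = V \<oplus> o1" and az: "\<alpha> \<noteq> Z" and bz: "\<beta> \<noteq> Z"
    and aU: "\<alpha> \<triangleleft> U" and bV: "\<beta> \<triangleleft> V"
    and pU: "\<forall>p. pr p \<and> p \<triangleleft> U \<longrightarrow> p \<triangleleft> \<alpha>" and pV: "\<forall>p. pr p \<and> p \<triangleleft> V \<longrightarrow> p \<triangleleft> \<beta>"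
  shows "pw M U 3 \<prec> nm M (K ^ 3) \<otimes> (pw M \<alpha> 4 \<otimes> pw M \<beta> 4)"
proof -
  have mz: "\<alpha> \<otimes> \<beta> \<noteq> Z" using az bz by simp
  obtain r where r: "r \<triangleleft> \<alpha> \<otimes> \<beta>" "sqf r" "\<forall>p. pr p \<and> p \<triangleleft> \<alpha> \<otimes> \<beta> \<longrightarrow> p \<triangleleft> r"
    using rad_exists[OF mz] by blast
  have "is_rad M r ((V \<otimes> o1) \<otimes> U)"
    unfolding is_rad_def
  proof (intro conjI allI impI)
    have "\<beta> \<otimes> \<alpha> \<triangleleft> V \<otimes> U" using dvd_mul_mono[OF bV aU] .
    hence "\<alpha> \<otimes> \<beta> \<triangleleft> V \<otimes> U" by (simp only: mul_comm[of \<beta> \<alpha>])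
    thus "r \<triangleleft> (V \<otimes> o1) \<otimes> U" using dvd_trans r(1) by simp
    show "sqf r" using r(2) .
    fix p assume p: "pr p \<and> p \<triangleleft> (V \<otimes> o1) \<otimes> U"
    hence "p \<triangleleft> V \<or> p \<triangleleft> U" using euclid by simp
    hence "p \<triangleleft> \<beta> \<or> p \<triangleleft> \<alpha>" using pU pV p by blast
    hence "p \<triangleleft> \<alpha> \<otimes> \<beta>" using dvd_mult dvd_mult2 by blast
    thus "p \<triangleleft> r" using r(3) p by blast
  qed
  moreover have "mcoprime M V o1" "mcoprime M o1 U" using coprime_one by blast+
  moreover have "mcoprime M V U" using coprime_succ UV by simp
  ultimately have "U \<otimes> (U \<otimes> U) \<prec> nm M (K ^ 3) \<otimes> ((r \<otimes> r) \<otimes> (r \<otimes> r))"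
    using abc UV unfolding abc_third_def by blast
  hence "pw M U 3 \<prec> nm M (K ^ 3) \<otimes> pw M r 4" by (simp only: pw3 pw4)
  also have "\<dots> \<preceq> nm M (K ^ 3) \<otimes> pw M (\<alpha> \<otimes> \<beta>) 4"
    using mul_le_mono2 pw_mono dvd_le[OF r(1) mz] by blast
  finally show ?thesis by (simp only: pw_distrib)
qed

end

context expc begin

lemma f_nm: "exp_sigma1 M f \<Longrightarrow> f x (nm M n) = pw M x n"
  unfolding exp_sigma1_def by (induct n) simp_all

lemma small_props:
  assumes x: "o1 \<prec> x" and j: "2 \<le> j" "j < 5"
  shows "x \<noteq> Z" "x \<triangleleft> pw M x j" "\<forall>p. pr p \<and> p \<triangleleft> pw M x j \<longrightarrow> p \<triangleleft> x"
    "pw M x 2 \<preceq> pw M x j" "pw M x j \<preceq> pw M x 4"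
proof -
  show xz: "x \<noteq> Z" using x by (auto simp: lt_iff)
  show "x \<triangleleft> pw M x j" by (rule dvd_pw) (use j in simp)
  show "\<forall>p. pr p \<and> p \<triangleleft> pw M x j \<longrightarrow> p \<triangleleft> x" using prime_dvd_pw by blast
  show "pw M x 2 \<preceq> pw M x j" by (rule pw_mono_exp[OF xz j(1)])
  show "pw M x j \<preceq> pw M x 4" by (rule pw_mono_exp[OF xz]) (use j in simp)
qed

lemma main:
  assumes abc: "abc_third M K" and fe: "exp_sigma1 M f" and cf: "catalan M UNIV UNIV f"
  shows "catalan M UNIV A e"
  unfolding catalan_def
proof (intro ballI impI)
  fix x y a b
  assume aA: "a \<in> A" and bA: "b \<in> A"
    and H: "o1 \<prec> x \<and> o1 \<prec> y \<and> o1 \<prec> a \<and> o1 \<prec> b \<and> e x a = e y b \<oplus> o1"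
  hence x: "o1 \<prec> x" and y: "o1 \<prec> y" and a1: "o1 \<prec> a" and b1: "o1 \<prec> b"
    and UV: "e x a = e y b \<oplus> o1" by blast+
  have std: "x = nm M 3 \<and> a = nm M 2 \<and> y = nm M 2 \<and> b = nm M 3"
    if hij: "\<exists>i. a = nm M i" "\<exists>j. b = nm M j"
  proof -
    obtain i j where ij: "a = nm M i" "b = nm M j" using hij by blast
    have "f x a = e x a" "f y b = e y b" unfolding ij using f_nm[OF fe] e_nm by simp_all
    hence "f x a = f y b \<oplus> o1" using UV by simp
    thus ?thesis using cf H unfolding catalan_def by blast
  qed
  define U where "U = e x a"
  define V where "V = e y b"
  have UV': "U = V \<oplus> o1" using UV U_def V_def by simp
  have Uz: "U \<noteq> Z" using UV' by simp
  have VU: "V \<preceq> U" using UV' by simp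
  let ?k = "nm M (K ^ 3)"
  have bounded: "\<exists>i. a = nm M i" "\<exists>j. b = nm M j" if "U \<preceq> nm M B" for B
  proof -
    show "\<exists>i. a = nm M i" using std_exp[OF x aA] that U_def by blast
    show "\<exists>j. b = nm M j" using std_exp[OF y bA] le_trans[OF VU that] V_def by blast
  qed
  have Ra: "(\<exists>j. 2 \<le> j \<and> j < 5 \<and> a = nm M j) \<or>
    (\<exists>\<alpha>. \<alpha> \<noteq> Z \<and> \<alpha> \<triangleleft> U \<and> pw M \<alpha> 5 \<preceq> U \<and> (\<forall>p. pr p \<and> p \<triangleleft> U \<longrightarrow> p \<triangleleft> \<alpha>))"
    using repr[OF x aA a1] U_def by blast
  have Rb: "(\<exists>j. 2 \<le> j \<and> j < 5 \<and> b = nm M j) \<or>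
    (\<exists>\<beta>. \<beta> \<noteq> Z \<and> \<beta> \<triangleleft> V \<and> pw M \<beta> 5 \<preceq> V \<and> (\<forall>p. pr p \<and> p \<triangleleft> V \<longrightarrow> p \<triangleleft> \<beta>))"
    using repr[OF y bA b1] V_def by blast
  show "x = nm M 3 \<and> a = nm M 2 \<and> y = nm M 2 \<and> b = nm M 3"
  proof (cases "\<exists>j. 2 \<le> j \<and> j < 5 \<and> a = nm M j")
    case sa: True
    then obtain i where i: "2 \<le> i" "i < 5" "a = nm M i" by blast
    have Ui: "U = pw M x i" using U_def i(3) e_nm by simp
    show ?thesis
    proof (cases "\<exists>j. 2 \<le> j \<and> j < 5 \<and> b = nm M j")
      case True thus ?thesis using std sa by blast
    next
      case False
      then obtain \<beta> where \<beta>: "\<beta> \<noteq> Z" "\<beta> \<triangleleft> V" "pw M \<beta> 5 \<preceq> V" "\<forall>p. pr p \<and> p \<triangleleft> V \<longrightarrow> p \<triangleleft> \<beta>"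
        using Rb by blast
      note sp = small_props[OF x i(1) i(2)]
      have H3: "pw M U 3 \<prec> ?k \<otimes> (pw M x 4 \<otimes> pw M \<beta> 4)"
        by (rule abc_apply[OF abc UV' sp(1) \<beta>(1) _ \<beta>(2) _ \<beta>(4)]) (use sp Ui in simp_all)
      have hb: "pw M \<beta> 20 \<preceq> pw M U 4"
      proof -
        have "pw M (pw M \<beta> 5) 4 \<preceq> pw M U 4" using pw_mono le_trans[OF \<beta>(3) VU] by blast
        thus ?thesis using pw_mult[of \<beta> 5 4] by simp
      qed
      have "U \<preceq> pw M (pw M ?k 5) 2"
        by (rule chase2[OF Uz sp(1) H3 _ _ hb]) (use sp Ui in simp_all)
      hence "U \<preceq> nm M (((K ^ 3) ^ 5) ^ 2)" by (simp only: nm_pw[symmetric])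
      thus ?thesis using bounded std by blast
    qed
  next
    case False
    then obtain \<alpha> where \<alpha>: "\<alpha> \<noteq> Z" "\<alpha> \<triangleleft> U" "pw M \<alpha> 5 \<preceq> U" "\<forall>p. pr p \<and> p \<triangleleft> U \<longrightarrow> p \<triangleleft> \<alpha>"
      using Ra by blast
    have ha: "pw M \<alpha> 20 \<preceq> pw M U 4"
    proof -
      have "pw M (pw M \<alpha> 5) 4 \<preceq> pw M U 4" using pw_mono \<alpha>(3) by blast
      thus ?thesis using pw_mult[of \<alpha> 5 4] by simp
    qed
    show ?thesis
    proof (cases "\<exists>j. 2 \<le> j \<and> j < 5 \<and> b = nm M j")
      case True
      then obtain j where j: "2 \<le> j" "j < 5" "b = nm M j" by blast
      have Vj: "V = pw M y j" using V_def j(3) e_nm by simp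
      note sp = small_props[OF y j(1) j(2)]
      have H3: "pw M U 3 \<prec> ?k \<otimes> (pw M \<alpha> 4 \<otimes> pw M y 4)"
        by (rule abc_apply[OF abc UV' \<alpha>(1) sp(1) \<alpha>(2) _ \<alpha>(4)]) (use sp Vj in simp_all)
      have hb: "pw M y 20 \<preceq> pw M U 10"
      proof -
        have "pw M y 2 \<preceq> U" using sp(4) Vj VU le_trans by simp
        hence "pw M (pw M y 2) 10 \<preceq> pw M U 10" using pw_mono by blast
        thus ?thesis using pw_mult[of y 2 10] by simp
      qed
      have "U \<prec> pw M ?k 5" by (rule chase[OF Uz H3 ha hb]) simp
      hence "U \<preceq> nm M ((K ^ 3) ^ 5)" unfolding nm_pw[symmetric] by (rule lt_imp_le)
      thus ?thesis using bounded std by blast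
    next
      case False
      then obtain \<beta> where \<beta>: "\<beta> \<noteq> Z" "\<beta> \<triangleleft> V" "pw M \<beta> 5 \<preceq> V" "\<forall>p. pr p \<and> p \<triangleleft> V \<longrightarrow> p \<triangleleft> \<beta>"
        using Rb by blast
      have H3: "pw M U 3 \<prec> ?k \<otimes> (pw M \<alpha> 4 \<otimes> pw M \<beta> 4)"
        by (rule abc_apply[OF abc UV' \<alpha>(1) \<beta>(1) \<alpha>(2) \<beta>(2) \<alpha>(4) \<beta>(4)])
      have hb: "pw M \<beta> 20 \<preceq> pw M U 4"
      proof -
        have "pw M (pw M \<beta> 5) 4 \<preceq> pw M U 4" using pw_mono le_trans[OF \<beta>(3) VU] by blast
        thus ?thesis using pw_mult[of \<beta> 5 4] by simp
      qed
      have "U \<prec> pw M ?k 5" by (rule chase[OF Uz H3 ha hb]) simp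
      hence "U \<preceq> nm M ((K ^ 3) ^ 5)" unfolding nm_pw[symmetric] by (rule lt_imp_le)
      thus ?thesis using bounded std by blast
    qed
  qed
qed

end

theorem theorem5p2:
  fixes M :: "'a Lstr" and K :: nat and A :: "'a set" and e :: "'a \<Rightarrow> 'a \<Rightarrow> 'a"
  assumes "ISigma1 M"
    and "abc_third M K"
    and "\<exists>f. exp_sigma1 M f \<and> catalan M UNIV UNIV f"
    and "ExpPrime M A e"
  shows "catalan M UNIV A e"
proof -
  interpret expc M A e using assms(1,4) by (unfold_locales)
  obtain f where "exp_sigma1 M f" "catalan M UNIV UNIV f" using assms(3) by blast
  thus ?thesis using main[OF assms(2)] by blast
qed


end
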